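(* Let $X$ and $Y$ be real Banach spaces. Then (a) $\mathrm{SA}_{\mathcal K}(X,Y)\subset\mathrm{D}_{\mathcal K}(X,Y)\subset\mathrm{LDA}_{\mathcal K}(X,Y)\subset\mathrm{DA}_{\mathcal K}(X,Y)\subset\mathrm{A}_{\mathcal K}(X,Y)$; (b) $\mathrm{A}_{\mathcal K}(X,Y)=\mathrm{Lip}_{0\mathcal K}(X,Y)$.
   Context: $\widetilde X=\{(x,y)\in X^2:x\neq y\}$. $\mathrm{Lip}_0(X,Y)$ is the Banach space of Lipschitz $f\colon X\to Y$ with $f(0)=0$ and norm $\|f\|=\sup_{(x,y)\in\widetilde X}\|f(x)-f(y)\|/\|x-y\|$; $\mathrm{Lip}_{0\mathcal K}(X,Y)$ is the set of $f\in\mathrm{Lip}_0(X,Y)$ whose set of slopes $\{\frac{f(x)-f(y)}{\|x-y\|}:(x,y)\in\widetilde X\}$ is relatively compact in $Y$. For $f\in\mathrm{Lip}_0(X,Y)$: $f\in\mathrm{SA}(X,Y)$ if $\|f(x)-f(y)\|=\|f\|\,\|x-y\|$ for some $(x,y)\in\widetilde X$; $f\in\mathrm{D}(X,Y)$ if there are $x\in X$, $e\in S_X$ with $f'(x,e)=\lim_{t\to0}\frac{f(x+te)-f(x)}{t}$ existing in $Y$ and $\|f'(x,e)\|=\|f\|$; $f\in\mathrm{A}(X,Y)$ if there are $z\in Y$ with $\|z\|=\|f\|$ and $(x_n,y_n)\in\widetilde X$ with $\frac{f(x_n)-f(y_n)}{\|x_n-y_n\|}\to z$; $f\in\mathrm{DA}(X,Y)$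 if additionally $\frac{x_n-y_n}{\|x_n-y_n\|}\to u$ for some $u\in S_X$; $f\in\mathrm{LDA}(X,Y)$ if additionally also $x_n,y_n\to\bar x$ for some $\bar x\in X$. For each of these sets $\mathrm{M}$, $\mathrm{M}_{\mathcal K}(X,Y)=\mathrm{M}(X,Y)\cap\mathrm{Lip}_{0\mathcal K}(X,Y)$. *)

theory Defs
  imports "HOL-Analysis.Analysis"
begin

definition slopes :: "('a::real_normed_vector \<Rightarrow> 'b::real_normed_vector) \<Rightarrow> 'b set" where
  "slopes f = {(f x - f y) /\<^sub>R norm (x - y) | x y. x \<noteq> y}"

definition lipnorm :: "('a::real_normed_vector \<Rightarrow> 'b::real_normed_vector) \<Rightarrow> real" where
  "lipnorm f = (SUP p \<in> {(x, y). x \<noteq> y}. norm (f (fst p) - f (snd p)) / norm (fst p - snd p))"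

definition Lip0 :: "('a::real_normed_vector \<Rightarrow> 'b::real_normed_vector) set" where
  "Lip0 = {f. f 0 = 0 \<and> bdd_above {norm (f x - f y) / norm (x - y) | x y. x \<noteq> y}}"

definition Lip0K :: "('a::real_normed_vector \<Rightarrow> 'b::real_normed_vector) set" where
  "Lip0K = {f \<in> Lip0. compact (closure (slopes f))}"

definition SA :: "('a::real_normed_vector \<Rightarrow> 'b::real_normed_vector) set" where
  "SA = {f \<in> Lip0. \<exists>x y. x \<noteq> y \<and> norm (f x - f y) = lipnorm f * norm (x - y)}"

definition Dset :: "('a::real_normed_vector \<Rightarrow> 'b::real_normed_vector) set" where
  "Dset = {f \<in> Lip0. \<exists>x e z. norm e = 1 \<and>
      ((\<lambda>t::real. (f (x + t *\<^sub>R e) - f x) /\<^sub>R t) \<longlongrightarrow> z) (at 0) \<and> norm z = lipnorm f}"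

definition Aset :: "('a::real_normed_vector \<Rightarrow> 'b::real_normed_vector) set" where
  "Aset = {f \<in> Lip0. \<exists>z xs ys. norm z = lipnorm f \<and> (\<forall>n. xs n \<noteq> ys n) \<and>
      (\<lambda>n. (f (xs n) - f (ys n)) /\<^sub>R norm (xs n - ys n)) \<longlonglongrightarrow> z}"

definition DA :: "('a::real_normed_vector \<Rightarrow> 'b::real_normed_vector) set" where
  "DA = {f \<in> Lip0. \<exists>z u xs ys. norm z = lipnorm f \<and> norm u = 1 \<and> (\<forall>n. xs n \<noteq> ys n) \<and>
      (\<lambda>n. (f (xs n) - f (ys n)) /\<^sub>R norm (xs n - ys n)) \<longlonglongrightarrow> z \<and>
      (\<lambda>n. (xs n - ys n) /\<^sub>R norm (xs n - ys n)) \<longlonglongrightarrow> u}"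

definition LDA :: "('a::real_normed_vector \<Rightarrow> 'b::real_normed_vector) set" where
  "LDA = {f \<in> Lip0. \<exists>z u xb xs ys. norm z = lipnorm f \<and> norm u = 1 \<and> (\<forall>n. xs n \<noteq> ys n) \<and>
      (\<lambda>n. (f (xs n) - f (ys n)) /\<^sub>R norm (xs n - ys n)) \<longlonglongrightarrow> z \<and>
      (\<lambda>n. (xs n - ys n) /\<^sub>R norm (xs n - ys n)) \<longlonglongrightarrow> u \<and>
      xs \<longlonglongrightarrow> xb \<and> ys \<longlonglongrightarrow> xb}"

end

theory Submission
  imports Defs
begin

lemma jensen_finite:
  fixes g :: "real \<Rightarrow> 'b::real_normed_vector" and y1 :: 'b
  assumes bnd: "\<And>a b. a \<le> b \<Longrightarrow> norm (g b - g a - (b - a) *\<^sub>R y1) \<le> M * (b - a)"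
    and near: "\<And>i. i \<in> F \<Longrightarrow> norm (g (fst i + snd i) - g (fst i - snd i) - (2 * snd i) *\<^sub>R y1) \<le> \<rho> * (2 * snd i)"
    and pos: "\<And>i. i \<in> F \<Longrightarrow> 0 < snd i"
  shows "finite F \<Longrightarrow> a \<le> b \<Longrightarrow> (\<forall>i\<in>F. a \<le> fst i - snd i \<and> fst i + snd i \<le> b) \<Longrightarrow>
     pairwise (\<lambda>i j. disjnt {fst i - snd i..fst i + snd i} {fst j - snd j..fst j + snd j}) F \<Longrightarrow>
     norm (g b - g a - (b - a) *\<^sub>R y1) \<le> M * (b - a) - (M - \<rho>) * (\<Sum>i\<in>F. 2 * snd i)"
  using near pos
proof (induction "card F" arbitrary: F a b rule: less_induct)
  case less
  define W where "W = (\<lambda>a b. g b - g a - (b - a) *\<^sub>R y1)"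
  have Wadd: "W a c = W a b + W b c" for a b c
    unfolding W_def by (simp add: algebra_simps)
  show ?case
  proof (cases "F = {}")
    case True
    then show ?thesis using bnd[OF less.prems(2)] by simp
  next
    case False
    then obtain i0 where i0: "i0 \<in> F" by blast
    define c0 r0 where "c0 = fst i0" and "r0 = snd i0"
    have r0: "0 < r0" using less.prems(6)[OF i0] r0_def by simp
    have i0ab: "a \<le> c0 - r0" "c0 + r0 \<le> b" using less.prems(3) i0 c0_def r0_def by auto
    define FL where "FL = {i \<in> F - {i0}. fst i + snd i \<le> c0 - r0}"
    define FR where "FR = {i \<in> F - {i0}. c0 + r0 \<le> fst i - snd i}"
    have split: "F - {i0} = FL \<union> FR"
    proof
      show "F - {i0} \<subseteq> FL \<union> FR"
      proof
        fix i assume i: "i \<in> F - {i0}"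
        have "disjnt {fst i - snd i..fst i + snd i} {c0 - r0..c0 + r0}"
          using less.prems(4) i i0 unfolding pairwise_def c0_def r0_def by auto
        moreover have "0 < snd i" using less.prems(6) i by auto
        ultimately have "fst i + snd i < c0 - r0 \<or> c0 + r0 < fst i - snd i"
          using r0 unfolding disjnt_def
          by (smt (verit, ccfv_threshold) atLeastAtMost_iff disjoint_iff)
        then show "i \<in> FL \<union> FR" using i unfolding FL_def FR_def by auto
      qed
    qed (auto simp: FL_def FR_def)
    have disjLR: "FL \<inter> FR = {}" unfolding FL_def FR_def using r0 less.prems(6) by force
    have finL: "finite FL" and finR: "finite FR" using less.prems(1) split by (metis finite_Diff finite_Un)+
    have cL: "card FL < card F"
      by (rule psubset_card_mono[OF less.prems(1)]) (use i0 in \<open>auto simp: FL_def\<close>)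
    have cR: "card FR < card F"
      by (rule psubset_card_mono[OF less.prems(1)]) (use i0 in \<open>auto simp: FR_def\<close>)
    have IHL: "norm (W a (c0 - r0)) \<le> M * (c0 - r0 - a) - (M - \<rho>) * (\<Sum>i\<in>FL. 2 * snd i)"
      unfolding W_def
      apply (rule less.hyps[OF cL finL i0ab(1)])
      using less.prems unfolding FL_def pairwise_def by auto
    have IHR: "norm (W (c0 + r0) b) \<le> M * (b - (c0 + r0)) - (M - \<rho>) * (\<Sum>i\<in>FR. 2 * snd i)"
      unfolding W_def
      apply (rule less.hyps[OF cR finR i0ab(2)])
      using less.prems unfolding FR_def pairwise_def by auto
    have mid: "norm (W (c0 - r0) (c0 + r0)) \<le> \<rho> * (2 * r0)"
      using less.prems(5)[OF i0] unfolding W_def c0_def r0_def by simp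
    have sumF: "(\<Sum>i\<in>F. 2 * snd i) = 2 * r0 + (\<Sum>i\<in>FL. 2 * snd i) + (\<Sum>i\<in>FR. 2 * snd i)"
    proof -
      have "(\<Sum>i\<in>F. 2 * snd i) = 2 * snd i0 + (\<Sum>i\<in>F - {i0}. 2 * snd i)"
        using less.prems(1) i0 by (simp add: sum.remove)
      also have "(\<Sum>i\<in>F - {i0}. 2 * snd i) = (\<Sum>i\<in>FL. 2 * snd i) + (\<Sum>i\<in>FR. 2 * snd i)"
        unfolding split by (rule sum.union_disjoint[OF finL finR disjLR])
      finally show ?thesis using r0_def by simp
    qed
    have "W a b = W a (c0 - r0) + W (c0 - r0) (c0 + r0) + W (c0 + r0) b"
      using Wadd by metis
    then have "norm (W a b) \<le> norm (W a (c0 - r0)) + norm (W (c0 - r0) (c0 + r0)) + norm (W (c0 + r0) b)"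
      by (metis norm_triangle_ineq add_right_mono order_trans)
    then have "norm (W a b) \<le> M * (b - a) - (M - \<rho>) * (\<Sum>i\<in>F. 2 * snd i)"
      using IHL IHR mid unfolding sumF by (simp add: algebra_simps)
    then show ?thesis unfolding W_def by simp
  qed
qed

lemma content_cball_real: "0 \<le> r \<Longrightarrow> measure lebesgue (cball (c::real) r) = 2 * r"
  by (simp add: cball_eq_atLeastAtMost)

lemma jensen_countable:
  fixes g :: "real \<Rightarrow> 'b::real_normed_vector" and y1 :: 'b
  assumes bnd: "\<And>a b. a \<le> b \<Longrightarrow> norm (g b - g a - (b - a) *\<^sub>R y1) \<le> M * (b - a)"
    and near: "\<And>i. i \<in> C \<Longrightarrow> norm (g (fst i + snd i) - g (fst i - snd i) - (2 * snd i) *\<^sub>R y1) \<le> \<rho> * (2 * snd i)"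
    and pos: "\<And>i. i \<in> C \<Longrightarrow> 0 < snd i"
    and C: "countable C" and ab: "a \<le> b" and inside: "\<forall>i\<in>C. a \<le> fst i - snd i \<and> fst i + snd i \<le> b"
    and disj: "pairwise (\<lambda>i j. disjnt (cball (fst i) (snd i)) (cball (fst j) (snd j))) C"
    and Mr: "\<rho> < M"
  shows "(\<Union>i\<in>C. cball (fst i) (snd i)) \<in> lmeasurable"
    "measure lebesgue (\<Union>i\<in>C. cball (fst i) (snd i)) \<le> (M * (b - a) - norm (g b - g a - (b - a) *\<^sub>R y1)) / (M - \<rho>)"
proof -
  have bound: "measure lebesgue (\<Union>i\<in>I. cball (fst i) (snd i)) \<le> (M * (b - a) - norm (g b - g a - (b - a) *\<^sub>R y1)) / (M - \<rho>)"
    if I: "I \<subseteq> C" "finite I" for I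
  proof -
    have "measure lebesgue (\<Union>i\<in>I. cball (fst i) (snd i)) \<le> (\<Sum>i\<in>I. measure lebesgue (cball (fst i) (snd i)))"
      by (rule measure_UNION_le) (use I in auto)
    also have "\<dots> = (\<Sum>i\<in>I. 2 * snd i)"
      using I pos by (intro sum.cong refl content_cball_real) (auto intro: less_imp_le)
    also have "\<dots> \<le> (M * (b - a) - norm (g b - g a - (b - a) *\<^sub>R y1)) / (M - \<rho>)"
    proof -
      have "norm (g b - g a - (b - a) *\<^sub>R y1) \<le> M * (b - a) - (M - \<rho>) * (\<Sum>i\<in>I. 2 * snd i)"
        apply (rule jensen_finite[OF bnd])
        using I near pos inside ab apply auto[6]
        using pairwise_subset[OF disj I(1)] unfolding cball_eq_atLeastAtMost .
      then show ?thesis using Mr by (simp add: field_simps)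
    qed
    finally show ?thesis .
  qed
  show "(\<Union>i\<in>C. cball (fst i) (snd i)) \<in> lmeasurable"
    by (rule fmeasurable_UN_bound[OF C _ bound]) auto
  show "measure lebesgue (\<Union>i\<in>C. cball (fst i) (snd i)) \<le> (M * (b - a) - norm (g b - g a - (b - a) *\<^sub>R y1)) / (M - \<rho>)"
    by (rule measure_UN_bound[OF C _ bound]) auto
qed

lemma quot_interval:
  fixes g :: "real \<Rightarrow> 'b::real_normed_vector"
  assumes "h \<noteq> 0"
  shows "(t + h/2) - \<bar>h\<bar>/2 = min t (t+h)" "(t + h/2) + \<bar>h\<bar>/2 = max t (t+h)"
    "(g ((t + h/2) + \<bar>h\<bar>/2) - g ((t + h/2) - \<bar>h\<bar>/2)) /\<^sub>R (2 * (\<bar>h\<bar>/2)) = (g (t+h) - g t) /\<^sub>R h"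
proof -
  show "(t + h/2) - \<bar>h\<bar>/2 = min t (t+h)" "(t + h/2) + \<bar>h\<bar>/2 = max t (t+h)" by (auto simp: abs_if)
  show "(g ((t + h/2) + \<bar>h\<bar>/2) - g ((t + h/2) - \<bar>h\<bar>/2)) /\<^sub>R (2 * (\<bar>h\<bar>/2)) = (g (t+h) - g t) /\<^sub>R h"
  proof (cases "h > 0")
    case True then show ?thesis by (simp add: add.commute)
  next
    case False
    then have "h < 0" using assms by simp
    then have "\<bar>h\<bar> = - h" by simp
    then show ?thesis using \<open>h < 0\<close>
      by (simp add: scaleR_minus_left[symmetric] del: scaleR_minus_left) (simp add: algebra_simps)
  qed
qed

lemma core_negligible:
  fixes g :: "real \<Rightarrow> 'b::real_normed_vector" and y1 :: 'b and E :: "real set"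
  assumes rho: "0 < \<rho>"
    and bndQ: "\<And>a b. a < b \<Longrightarrow> norm ((g b - g a) /\<^sub>R (b - a) - y1) \<le> M"
    and Eb: "bounded E"
    and E1: "\<And>t \<delta>. t \<in> E \<Longrightarrow> 0 < \<delta> \<Longrightarrow> \<exists>h. h \<noteq> 0 \<and> \<bar>h\<bar> < \<delta> \<and> norm ((g (t+h) - g t) /\<^sub>R h - y1) < \<rho>"
    and E2: "\<And>t \<delta>. t \<in> E \<Longrightarrow> 0 < \<delta> \<Longrightarrow> \<exists>h. h \<noteq> 0 \<and> \<bar>h\<bar> < \<delta> \<and> 3 * \<rho> < norm ((g (t+h) - g t) /\<^sub>R h - y1)"
  shows "negligible E"
proof (cases "E = {}")
  case True then show ?thesis by simp
next
  case False
  define Qc where "Qc = (\<lambda>i::real\<times>real. (g (fst i + snd i) - g (fst i - snd i)) /\<^sub>R (2 * snd i))"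
  have Qc_bnd: "norm (Qc i - y1) \<le> M" if "0 < snd i" for i
    using bndQ[of "fst i - snd i" "fst i + snd i"] that unfolding Qc_def by simp
  have Qc_h: "Qc (t + h/2, \<bar>h\<bar>/2) = (g (t+h) - g t) /\<^sub>R h" if "h \<noteq> 0" for t h
    using quot_interval(3)[OF that, where t=t and g=g] unfolding Qc_def by simp
  have cb_h: "cball (t + h/2) (\<bar>h\<bar>/2) = {min t (t+h) .. max t (t+h)}" if "h \<noteq> 0" for t h
    using quot_interval(1,2)[OF that, where t=t] unfolding cball_eq_atLeastAtMost by simp
  have W_Qc: "g (fst i + snd i) - g (fst i - snd i) - (2 * snd i) *\<^sub>R y1 = (2 * snd i) *\<^sub>R (Qc i - y1)"
    if "0 < snd i" for i
    using that unfolding Qc_def by (simp add: algebra_simps)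
  have normW: "norm (g (fst i + snd i) - g (fst i - snd i) - (2 * snd i) *\<^sub>R y1) = (2 * snd i) * norm (Qc i - y1)"
    if "0 < snd i" for i
    using that W_Qc[OF that] by simp
  have bnd: "norm (g b - g a - (b - a) *\<^sub>R y1) \<le> M * (b - a)" if "a \<le> b" for a b
  proof (cases "a = b")
    case True then show ?thesis by simp
  next
    case False
    then have ab: "a < b" using that by simp
    have "g b - g a - (b - a) *\<^sub>R y1 = (b - a) *\<^sub>R ((g b - g a) /\<^sub>R (b - a) - y1)"
      using ab by (simp add: scaleR_right_diff_distrib)
    then have "norm (g b - g a - (b - a) *\<^sub>R y1) = (b - a) * norm ((g b - g a) /\<^sub>R (b - a) - y1)"
      using ab by simp
    also have "\<dots> \<le> (b - a) * M" using bndQ[OF ab] ab by (intro mult_left_mono) auto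
    finally show ?thesis by (simp add: mult.commute)
  qed
  obtain t0 where t0: "t0 \<in> E" using False by blast
  obtain h0 where h0: "h0 \<noteq> 0" "3 * \<rho> < norm ((g (t0+h0) - g t0) /\<^sub>R h0 - y1)"
    using E2[OF t0, of 1] by auto
  have "3 * \<rho> < M"
    using h0 Qc_bnd[of "(t0 + h0/2, \<bar>h0\<bar>/2)"] Qc_h[OF h0(1), of t0] by simp
  define \<theta> where "\<theta> = (M - 3 * \<rho>) / (M - \<rho>)"
  have th0: "0 < \<theta>" and th1: "\<theta> < 1" using \<open>3 * \<rho> < M\<close> rho unfolding \<theta>_def by auto
  have step: "\<exists>T. E \<subseteq> T \<and> T \<in> lmeasurable \<and> measure lebesgue T \<le> \<theta> * measure lebesgue U"
    if U: "open U" "E \<subseteq> U" "U \<in> lmeasurable" for U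
  proof -
    define K1 where "K1 = {i. 0 < snd i \<and> cball (fst i) (snd i) \<subseteq> U \<and> 3 * \<rho> < norm (Qc i - y1)}"
    have cov1: "\<exists>i. i \<in> K1 \<and> x \<in> cball (fst i) (snd i) \<and> snd i < d" if x: "x \<in> E" "0 < d" for x d
    proof -
      obtain e where e: "0 < e" "ball x e \<subseteq> U" using U x by (meson openE subsetD)
      obtain h where h: "h \<noteq> 0" "\<bar>h\<bar> < min d e" "3 * \<rho> < norm ((g (x+h) - g x) /\<^sub>R h - y1)"
        using E2[OF x(1), of "min d e"] x(2) e(1) by auto
      have "cball (x + h/2) (\<bar>h\<bar>/2) \<subseteq> ball x e"
        unfolding cb_h[OF h(1)] using h(2) by (auto simp: dist_real_def)
      then have "cball (x + h/2) (\<bar>h\<bar>/2) \<subseteq> U" using e(2) by (rule subset_trans)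
      then have "(x + h/2, \<bar>h\<bar>/2) \<in> K1" unfolding K1_def using h Qc_h[OF h(1), of x] by auto
      moreover have "x \<in> cball (x + h/2) (\<bar>h\<bar>/2)" unfolding cb_h[OF h(1)] by auto
      ultimately show ?thesis using h by (intro exI[of _ "(x + h/2, \<bar>h\<bar>/2)"]) auto
    qed
    have "\<exists>C1. countable C1 \<and> C1 \<subseteq> K1 \<and> pairwise (\<lambda>i j. disjnt (cball (fst i) (snd i)) (cball (fst j) (snd j))) C1 \<and> negligible (E - (\<Union>i\<in>C1. cball (fst i) (snd i)))"
      apply (rule Vitali_covering_theorem_cballs[of K1 snd E fst])
        apply (simp add: K1_def)
       apply (rule cov1; assumption)
      apply blast
      done
    then obtain C1 where C1: "countable C1" "C1 \<subseteq> K1" "pairwise (\<lambda>i j. disjnt (cball (fst i) (snd i)) (cball (fst j) (snd j))) C1" "negligible (E - (\<Union>i\<in>C1. cball (fst i) (snd i)))"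
      by blast
    define S2 where "S2 = E \<inter> (\<Union>j\<in>C1. ball (fst j) (snd j))"
    define K2 where "K2 = {i. 0 < snd i \<and> (\<exists>j\<in>C1. cball (fst i) (snd i) \<subseteq> ball (fst j) (snd j)) \<and> norm (Qc i - y1) < \<rho>}"
    have cov2: "\<exists>i. i \<in> K2 \<and> x \<in> cball (fst i) (snd i) \<and> snd i < d" if x: "x \<in> S2" "0 < d" for x d
    proof -
      obtain j where j: "j \<in> C1" "x \<in> ball (fst j) (snd j)" "x \<in> E" using x unfolding S2_def by auto
      obtain e where e: "0 < e" "ball x e \<subseteq> ball (fst j) (snd j)" by (rule openE[OF open_ball j(2)])
      obtain h where h: "h \<noteq> 0" "\<bar>h\<bar> < min d e" "norm ((g (x+h) - g x) /\<^sub>R h - y1) < \<rho>"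
        using E1[OF j(3), of "min d e"] x(2) e(1) by auto
      have "cball (x + h/2) (\<bar>h\<bar>/2) \<subseteq> ball x e"
        unfolding cb_h[OF h(1)] using h(2) by (auto simp: dist_real_def)
      then have "cball (x + h/2) (\<bar>h\<bar>/2) \<subseteq> ball (fst j) (snd j)" using e(2) by (rule subset_trans)
      then have "(x + h/2, \<bar>h\<bar>/2) \<in> K2" unfolding K2_def using h j Qc_h[OF h(1), of x] by auto
      moreover have "x \<in> cball (x + h/2) (\<bar>h\<bar>/2)" unfolding cb_h[OF h(1)] by auto
      ultimately show ?thesis using h by (intro exI[of _ "(x + h/2, \<bar>h\<bar>/2)"]) auto
    qed
    have "\<exists>C2. countable C2 \<and> C2 \<subseteq> K2 \<and> pairwise (\<lambda>i j. disjnt (cball (fst i) (snd i)) (cball (fst j) (snd j))) C2 \<and> negligible (S2 - (\<Union>i\<in>C2. cball (fst i) (snd i)))"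
      apply (rule Vitali_covering_theorem_cballs[of K2 snd S2 fst])
        apply (simp add: K2_def)
       apply (rule cov2; assumption)
      apply blast
      done
    then obtain C2 where C2: "countable C2" "C2 \<subseteq> K2" "pairwise (\<lambda>i j. disjnt (cball (fst i) (snd i)) (cball (fst j) (snd j))) C2" "negligible (S2 - (\<Union>i\<in>C2. cball (fst i) (snd i)))"
      by blast
    define A where "A = (\<lambda>j. \<Union>i\<in>{i\<in>C2. cball (fst i) (snd i) \<subseteq> ball (fst j) (snd j)}. cball (fst i) (snd i))"
    have Aj: "A j \<in> lmeasurable \<and> measure lebesgue (A j) \<le> \<theta> * (2 * snd j)" if j: "j \<in> C1" for j
    proof -
      let ?C = "{i\<in>C2. cball (fst i) (snd i) \<subseteq> ball (fst j) (snd j)}"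
      have j0: "0 < snd j" "3 * \<rho> < norm (Qc j - y1)" using j C1(2) unfolding K1_def by auto
      have C2pos: "0 < snd i" "norm (Qc i - y1) < \<rho>" if "i \<in> C2" for i using that C2(2) unfolding K2_def by auto
      have near: "norm (g (fst i + snd i) - g (fst i - snd i) - (2 * snd i) *\<^sub>R y1) \<le> \<rho> * (2 * snd i)"
        if "i \<in> ?C" for i
      proof -
        have i0: "0 < snd i" "norm (Qc i - y1) < \<rho>" using that C2pos by auto
        have "(2 * snd i) * norm (Qc i - y1) \<le> (2 * snd i) * \<rho>"
          using i0 by (intro mult_left_mono) auto
        then show ?thesis unfolding normW[OF i0(1)] by (simp add: mult.commute)
      qed
      have inside: "\<forall>i\<in>?C. fst j - snd j \<le> fst i - snd i \<and> fst i + snd i \<le> fst j + snd j"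
      proof
        fix i assume i: "i \<in> ?C"
        then have "cball (fst i) (snd i) \<subseteq> ball (fst j) (snd j)" by simp
        then have "cball (fst i) (snd i) \<subseteq> cball (fst j) (snd j)" using ball_subset_cball by (rule subset_trans)
        then have "{fst i - snd i .. fst i + snd i} \<subseteq> {fst j - snd j .. fst j + snd j}"
          unfolding cball_eq_atLeastAtMost .
        moreover have "0 < snd i" using C2pos i by auto
        ultimately show "fst j - snd j \<le> fst i - snd i \<and> fst i + snd i \<le> fst j + snd j"
          by (subst (asm) atLeastatMost_subset_iff) auto
      qed
      have Mr: "\<rho> < M" using \<open>3 * \<rho> < M\<close> rho by simp
      have jc: "countable ?C" using C2(1) by simp
      have disj: "pairwise (\<lambda>i j. disjnt (cball (fst i) (snd i)) (cball (fst j) (snd j))) ?C"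
        by (rule pairwise_subset[OF C2(3)]) auto
      have ab: "fst j - snd j \<le> fst j + snd j" using j0 by simp
      have posC: "\<And>i. i \<in> ?C \<Longrightarrow> 0 < snd i" using C2pos by auto
      note JC = jensen_countable[OF bnd near posC jc ab inside disj Mr]
      have "A j \<in> lmeasurable" unfolding A_def by (rule JC(1))
      moreover have "measure lebesgue (A j) \<le> (M * (2 * snd j) - norm (g (fst j + snd j) - g (fst j - snd j) - (2 * snd j) *\<^sub>R y1)) / (M - \<rho>)"
        unfolding A_def using JC(2) by simp
      moreover have "(M * (2 * snd j) - norm (g (fst j + snd j) - g (fst j - snd j) - (2 * snd j) *\<^sub>R y1)) / (M - \<rho>) \<le> \<theta> * (2 * snd j)"
      proof -
        have "(2 * snd j) * (3 * \<rho>) \<le> (2 * snd j) * norm (Qc j - y1)"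
          using j0 by (intro mult_left_mono) auto
        then have N: "norm (g (fst j + snd j) - g (fst j - snd j) - (2 * snd j) *\<^sub>R y1) \<ge> 3 * \<rho> * (2 * snd j)"
          unfolding normW[OF j0(1)] by (simp add: mult.commute mult.left_commute)
        have "(M * (2 * snd j) - norm (g (fst j + snd j) - g (fst j - snd j) - (2 * snd j) *\<^sub>R y1)) \<le> (M - 3 * \<rho>) * (2 * snd j)"
          using N by (simp add: algebra_simps)
        then have "(M * (2 * snd j) - norm (g (fst j + snd j) - g (fst j - snd j) - (2 * snd j) *\<^sub>R y1)) / (M - \<rho>) \<le> (M - 3 * \<rho>) * (2 * snd j) / (M - \<rho>)"
          using Mr by (intro divide_right_mono) auto
        then show ?thesis unfolding \<theta>_def by simp
      qed
      ultimately show ?thesis by linarith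
    qed
    define U1 where "U1 = (\<Union>j\<in>C1. cball (fst j) (snd j))"
    have U1sub: "U1 \<subseteq> U" using C1(2) unfolding U1_def K1_def by auto
    have U1m: "U1 \<in> lmeasurable" unfolding U1_def
      by (rule fmeasurable_UN[OF C1(1) _ _ U(3)]) (use C1(2) K1_def in auto)
    have U1U: "measure lebesgue U1 \<le> measure lebesgue U"
      using U1sub U1m U(3) by (intro measure_mono_fmeasurable) auto
    define T0 where "T0 = (\<Union>i\<in>C2. cball (fst i) (snd i))"
    have T0eq: "T0 = (\<Union>j\<in>C1. A j)"
      unfolding T0_def A_def using C2(2) unfolding K2_def by blast
    have boundT: "measure lebesgue (\<Union>j\<in>G. A j) \<le> \<theta> * measure lebesgue U1" if G: "G \<subseteq> C1" "finite G" for G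
    proof -
      have "measure lebesgue (\<Union>j\<in>G. A j) \<le> (\<Sum>j\<in>G. measure lebesgue (A j))"
        by (rule measure_UNION_le) (use G Aj in auto)
      also have "\<dots> \<le> (\<Sum>j\<in>G. \<theta> * (2 * snd j))"
        by (rule sum_mono) (use G Aj in auto)
      also have "\<dots> = \<theta> * (\<Sum>j\<in>G. measure lebesgue (cball (fst j) (snd j)))"
        unfolding sum_distrib_left
      proof (intro sum.cong refl)
        fix j assume "j \<in> G"
        then have "0 < snd j" using G C1(2) unfolding K1_def by auto
        then show "\<theta> * (2 * snd j) = \<theta> * measure lebesgue (cball (fst j) (snd j))"
          using content_cball_real[of "snd j" "fst j"] by simp
      qed
      also have "(\<Sum>j\<in>G. measure lebesgue (cball (fst j) (snd j))) = measure lebesgue (\<Union>j\<in>G. cball (fst j) (snd j))"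
      proof (rule measure_negligible_finite_Union_image[symmetric, OF G(2)])
        show "pairwise (\<lambda>x y. negligible (cball (fst x) (snd x) \<inter> cball (fst y) (snd y))) G"
          using pairwise_subset[OF C1(3) G(1)] unfolding pairwise_def disjnt_def by auto
      qed auto
      also have "measure lebesgue (\<Union>j\<in>G. cball (fst j) (snd j)) \<le> measure lebesgue U1"
        using G U1m unfolding U1_def by (intro measure_mono_fmeasurable) auto
      finally show ?thesis using th0 by (simp add: mult_left_mono)
    qed
    have T0m: "T0 \<in> lmeasurable" unfolding T0eq
      by (rule fmeasurable_UN_bound[OF C1(1) _ boundT]) (use Aj in auto)
    have T0b: "measure lebesgue T0 \<le> \<theta> * measure lebesgue U1" unfolding T0eq
      by (rule measure_UN_bound[OF C1(1) _ boundT]) (use Aj in auto)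
    define N where "N = (E - U1) \<union> (S2 - T0) \<union> (\<Union>j\<in>C1. sphere (fst j) (snd j))"
    have Nn: "negligible N" unfolding N_def U1_def T0_def
      using C1(4) C2(4) C1(1) by (intro negligible_Un negligible_countable_Union) (auto simp: negligible_sphere)
    have ET: "E \<subseteq> T0 \<union> N"
    proof
      fix x assume x: "x \<in> E"
      show "x \<in> T0 \<union> N"
      proof (cases "x \<in> U1")
        case False then show ?thesis using x unfolding N_def by auto
      next
        case True
        then obtain j where j: "j \<in> C1" "x \<in> cball (fst j) (snd j)" unfolding U1_def by auto
        show ?thesis
        proof (cases "x \<in> sphere (fst j) (snd j)")
          case True then show ?thesis using j unfolding N_def by auto
        next
          case False
          then have "x \<in> ball (fst j) (snd j)" using j by auto
          then have "x \<in> S2" using j x unfolding S2_def by auto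
          then show ?thesis unfolding N_def by auto
        qed
      qed
    qed
    have Tm: "T0 \<union> N \<in> lmeasurable" using T0m Nn by (simp add: fmeasurable.Un negligible_imp_measurable)
    have "measure lebesgue (T0 \<union> N) \<le> measure lebesgue T0 + measure lebesgue N"
      using T0m negligible_imp_measurable[OF Nn] by (intro measure_Un_le fmeasurableD)
    also have "measure lebesgue N = 0" using Nn by (rule negligible_imp_measure0)
    finally have "measure lebesgue (T0 \<union> N) \<le> \<theta> * measure lebesgue U"
      using T0b U1U th0 by (smt (verit) mult_left_mono)
    then show ?thesis using ET Tm by blast
  qed
  define S where "S = measure lebesgue ` {U. open U \<and> E \<subseteq> U \<and> U \<in> lmeasurable}"
  define m where "m = Inf S"
  obtain R where R: "R > 0" "E \<subseteq> ball 0 R" using bounded_subset_ballD[OF Eb, of 0] by blast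
  have "ball 0 R \<in> {U. open U \<and> E \<subseteq> U \<and> U \<in> lmeasurable}" using R(2) by simp
  then have "measure lebesgue (ball (0::real) R) \<in> S" unfolding S_def by (rule imageI)
  then have Sne: "S \<noteq> {}" by blast
  have Sbd: "bdd_below S" unfolding S_def by (rule bdd_belowI[of _ 0]) (clarify, rule measure_nonneg)
  have mle: "m \<le> \<theta> * measure lebesgue U" if U: "open U" "E \<subseteq> U" "U \<in> lmeasurable" for U
  proof -
    obtain T where T: "E \<subseteq> T" "T \<in> lmeasurable" "measure lebesgue T \<le> \<theta> * measure lebesgue U"
      using step[OF U] by blast
    show ?thesis
    proof (rule field_le_epsilon)
      fix e :: real assume e: "0 < e"
      obtain V where V: "open V" "T \<subseteq> V" "V - T \<in> lmeasurable" "emeasure lebesgue (V - T) < ennreal e"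
        using sets_lebesgue_outer_open[of T e] T(2) e by blast
      have VT: "V = T \<union> (V - T)" using V(2) by blast
      have TVm: "T \<union> (V - T) \<in> lmeasurable" by (rule fmeasurable.Un[OF T(2) V(3)])
      then have Vm: "V \<in> lmeasurable" using VT by simp
      have "measure lebesgue (V - T) < e"
        using V(4) V(3) e by (simp add: emeasure_eq_measure2 ennreal_less_iff)
      moreover have "measure lebesgue (T \<union> (V - T)) \<le> measure lebesgue T + measure lebesgue (V - T)"
        using T(2) V(3) by (intro measure_Un_le fmeasurableD)
      then have "measure lebesgue V \<le> measure lebesgue T + measure lebesgue (V - T)"
        using VT by simp
      moreover have "m \<le> measure lebesgue V"
      proof -
        have "V \<in> {U. open U \<and> E \<subseteq> U \<and> U \<in> lmeasurable}" using V(1,2) T(1) Vm by auto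
        then have "measure lebesgue V \<in> S" unfolding S_def by (rule imageI)
        then show ?thesis unfolding m_def using Sbd by (rule cInf_lower)
      qed
      ultimately show "m \<le> \<theta> * measure lebesgue U + e" using T(3) by linarith
    qed
  qed
  have m0: "m \<le> 0"
  proof -
    have "m * (1 - \<theta>) \<le> 0"
    proof (rule field_le_epsilon)
      fix e :: real assume e: "0 < e"
      have "Inf S < m + e" using e unfolding m_def by simp
      then obtain x where x: "x \<in> S" "x < m + e" using cInf_less_iff[OF Sne Sbd] by blast
      then obtain U where U: "open U" "E \<subseteq> U" "U \<in> lmeasurable" "x = measure lebesgue U"
        unfolding S_def by blast
      have "\<theta> * x \<le> \<theta> * (m + e)" using x(2) th0 by (intro mult_left_mono) auto
      then have m1: "m \<le> \<theta> * (m + e)" using mle[OF U(1-3)] U(4) by simp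
      have te: "\<theta> * e \<le> e" using th1 th0 e by (intro mult_left_le_one_le) auto
      have e1: "m * (1 - \<theta>) = m - \<theta> * m" by (simp add: algebra_simps)
      have e2: "\<theta> * (m + e) = \<theta> * m + \<theta> * e" by (simp add: algebra_simps)
      show "m * (1 - \<theta>) \<le> 0 + e" using m1 te e1 e2 by linarith
    qed
    then show ?thesis using th1 by (simp add: mult_le_0_iff)
  qed
  show ?thesis unfolding negligible_outer
  proof (intro allI impI)
    fix e :: real assume e: "0 < e"
    have "Inf S < m + e" using e unfolding m_def by simp
    then obtain x where x: "x \<in> S" "x < m + e" using cInf_less_iff[OF Sne Sbd] by blast
    then obtain U where U: "open U" "E \<subseteq> U" "U \<in> lmeasurable" "x = measure lebesgue U"
      unfolding S_def by blast
    then show "\<exists>T. E \<subseteq> T \<and> T \<in> lmeasurable \<and> measure lebesgue T < e"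
      using x m0 by (intro exI[of _ U]) auto
  qed
qed

lemma cauchy_at0:
  fixes q :: "real \<Rightarrow> 'b::banach"
  assumes C: "\<And>\<epsilon>. \<epsilon> > 0 \<Longrightarrow> \<exists>\<delta>>0. \<forall>h h'. h \<noteq> 0 \<and> \<bar>h\<bar> < \<delta> \<and> h' \<noteq> 0 \<and> \<bar>h'\<bar> < \<delta> \<longrightarrow> norm (q h - q h') < \<epsilon>"
  shows "\<exists>z. (q \<longlongrightarrow> z) (at 0)"
proof -
  define s where "s = (\<lambda>n::nat. q (1 / Suc n))"
  have small: "\<exists>M. \<forall>n\<ge>M. 1 / real (Suc n) < \<delta>" if "\<delta> > 0" for \<delta> :: real
  proof -
    obtain M :: nat where M: "1 / \<delta> < M" using reals_Archimedean2 by blast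
    have "1 / real (Suc n) < \<delta>" if "n \<ge> M" for n
    proof -
      have "1 / \<delta> < real (Suc n)" using M that by linarith
      then show ?thesis using \<open>\<delta> > 0\<close> by (simp add: field_simps)
    qed
    then show ?thesis by blast
  qed
  have "Cauchy s"
  proof (rule metric_CauchyI)
    fix e :: real assume e: "0 < e"
    obtain \<delta> where d: "\<delta> > 0" "\<forall>h h'. h \<noteq> 0 \<and> \<bar>h\<bar> < \<delta> \<and> h' \<noteq> 0 \<and> \<bar>h'\<bar> < \<delta> \<longrightarrow> norm (q h - q h') < e"
      using C[OF e] by blast
    obtain M where M: "\<forall>n\<ge>M. 1 / real (Suc n) < \<delta>" using small[OF d(1)] by blast
    show "\<exists>M. \<forall>m\<ge>M. \<forall>n\<ge>M. dist (s m) (s n) < e"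
    proof (intro exI allI impI)
      fix m n assume "M \<le> m" "M \<le> n"
      then show "dist (s m) (s n) < e" using M d(2) unfolding s_def dist_norm by simp
    qed
  qed
  then obtain z where z: "s \<longlonglongrightarrow> z" using Cauchy_convergent_iff convergent_def by blast
  show ?thesis
  proof (intro exI, unfold LIM_eq, intro allI impI)
    fix r :: real assume r: "0 < r"
    obtain \<delta> where d: "\<delta> > 0" "\<forall>h h'. h \<noteq> 0 \<and> \<bar>h\<bar> < \<delta> \<and> h' \<noteq> 0 \<and> \<bar>h'\<bar> < \<delta> \<longrightarrow> norm (q h - q h') < r/2"
      using C[of "r/2"] r by auto
    obtain M where M: "\<forall>n\<ge>M. 1 / real (Suc n) < \<delta>" using small[OF d(1)] by blast
    obtain N where N: "\<forall>n\<ge>N. norm (s n - z) < r/2"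
      using z r unfolding LIMSEQ_iff by (metis half_gt_zero)
    define n where "n = max M N"
    have n1: "1 / real (Suc n) < \<delta>" and n2: "norm (s n - z) < r/2" using M N unfolding n_def by auto
    show "\<exists>s>0. \<forall>x. x \<noteq> 0 \<and> norm (x - 0) < s \<longrightarrow> norm (q x - z) < r"
    proof (intro exI[of _ \<delta>] conjI allI impI)
      fix x :: real assume x: "x \<noteq> 0 \<and> norm (x - 0) < \<delta>"
      have "norm (q x - s n) < r/2" using d(2) x n1 unfolding s_def by auto
      have "norm (q x - z) \<le> norm (q x - s n) + norm (s n - z)"
        using norm_triangle_ineq[of "q x - s n" "s n - z"] by simp
      then show "norm (q x - z) < r" using \<open>norm (q x - s n) < r/2\<close> n2 by linarith
    qed (fact d(1))
  qed
qed

lemma nonconv_negligible: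
  fixes g :: "real \<Rightarrow> 'b::banach" and Kc :: "'b set"
  assumes K: "compact Kc" and quot: "\<And>s t. s \<noteq> t \<Longrightarrow> (g s - g t) /\<^sub>R (s - t) \<in> Kc"
  shows "negligible {t. \<not> (\<exists>z. ((\<lambda>h. (g (t+h) - g t) /\<^sub>R h) \<longlongrightarrow> z) (at 0))}"
proof -
  define q where "q = (\<lambda>t h. (g (t+h) - g t) /\<^sub>R h)"
  have qK: "q t h \<in> Kc" if "h \<noteq> 0" for t h
    using quot[of "t+h" t] that unfolding q_def by simp
  obtain B where B: "\<And>k. k \<in> Kc \<Longrightarrow> norm k \<le> B"
    using compact_imp_bounded[OF K] unfolding bounded_iff by blast
  have "\<forall>n::nat. \<exists>F. finite F \<and> F \<subseteq> Kc \<and> Kc \<subseteq> (\<Union>x\<in>F. ball x (1 / Suc n))"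
  proof
    fix n :: nat
    have cov: "Kc \<subseteq> (\<Union>x\<in>Kc. ball x (1 / Suc n))"
    proof
      fix k assume k: "k \<in> Kc"
      show "k \<in> (\<Union>x\<in>Kc. ball x (1 / Suc n))" by (rule UN_I[OF k]) simp
    qed
    obtain F where F: "F \<subseteq> Kc" "finite F" "Kc \<subseteq> (\<Union>x\<in>F. ball x (1 / Suc n))"
      by (rule compactE_image[OF K _ cov]) simp
    then show "\<exists>F. finite F \<and> F \<subseteq> Kc \<and> Kc \<subseteq> (\<Union>x\<in>F. ball x (1 / Suc n))" by blast
  qed
  then obtain net where net: "\<And>n. finite (net n) \<and> net n \<subseteq> Kc \<and> Kc \<subseteq> (\<Union>x\<in>net n. ball x (1 / Suc n))"
    by metis
  define D where "D = (\<Union>n. net n)"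
  have Dc: "countable D" unfolding D_def using net by (simp add: countable_finite)
  define Eb where "Eb = (\<lambda>(y, n::nat, R::nat). {t::real. \<bar>t\<bar> < real R \<and>
      (\<forall>\<delta>>0. \<exists>h. h \<noteq> 0 \<and> \<bar>h\<bar> < \<delta> \<and> norm (q t h - y) < 1 / Suc n) \<and>
      (\<forall>\<delta>>0. \<exists>h. h \<noteq> 0 \<and> \<bar>h\<bar> < \<delta> \<and> 3 * (1 / Suc n) < norm (q t h - y))})"
  have Ebn: "negligible (Eb (y, n, R))" for y n R
  proof -
    let ?E = "{t::real. \<bar>t\<bar> < real R \<and>
      (\<forall>\<delta>>0. \<exists>h. h \<noteq> 0 \<and> \<bar>h\<bar> < \<delta> \<and> norm (q t h - y) < 1 / Suc n) \<and>
      (\<forall>\<delta>>0. \<exists>h. h \<noteq> 0 \<and> \<bar>h\<bar> < \<delta> \<and> 3 * (1 / Suc n) < norm (q t h - y))}"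
    have eq: "Eb (y, n, R) = ?E" unfolding Eb_def by simp
    have bq: "norm ((g b - g a) /\<^sub>R (b - a) - y) \<le> B + norm y" if "a < b" for a b
    proof -
      have "norm ((g b - g a) /\<^sub>R (b - a)) \<le> B" using B[OF quot[of b a]] that by simp
      moreover have "norm ((g b - g a) /\<^sub>R (b - a) - y) \<le> norm ((g b - g a) /\<^sub>R (b - a)) + norm y"
        by (rule norm_triangle_ineq4)
      ultimately show ?thesis by linarith
    qed
    have bd: "bounded ?E"
      by (rule bounded_subset[of "ball 0 (real R)"]) (auto simp: dist_real_def)
    have "negligible ?E"
    proof (rule core_negligible[where g = g and M = "B + norm y", OF _ bq bd])
      show "0 < 1 / real (Suc n)" by simp
      fix t \<delta> :: real
      assume t: "t \<in> ?E" and d: "0 < \<delta>"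
      show "\<exists>h. h \<noteq> 0 \<and> \<bar>h\<bar> < \<delta> \<and> norm ((g (t + h) - g t) /\<^sub>R h - y) < 1 / real (Suc n)"
        using t d unfolding q_def by blast
      show "\<exists>h. h \<noteq> 0 \<and> \<bar>h\<bar> < \<delta> \<and> 3 * (1 / real (Suc n)) < norm ((g (t + h) - g t) /\<^sub>R h - y)"
        using t d unfolding q_def by blast
    qed
    then show ?thesis unfolding eq .
  qed
  have sub: "{t. \<not> (\<exists>z. (q t \<longlongrightarrow> z) (at 0))} \<subseteq> \<Union> (Eb ` (D \<times> UNIV \<times> UNIV))"
  proof
    fix t assume t: "t \<in> {t. \<not> (\<exists>z. (q t \<longlongrightarrow> z) (at 0))}"
    then have "\<not> (\<forall>\<epsilon>>0. \<exists>\<delta>>0. \<forall>h h'. h \<noteq> 0 \<and> \<bar>h\<bar> < \<delta> \<and> h' \<noteq> 0 \<and> \<bar>h'\<bar> < \<delta> \<longrightarrow> norm (q t h - q t h') < \<epsilon>)"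
      using cauchy_at0[of "q t"] by blast
    then obtain \<epsilon> where eps: "\<epsilon> > 0" "\<forall>\<delta>>0. \<exists>h h'. h \<noteq> 0 \<and> \<bar>h\<bar> < \<delta> \<and> h' \<noteq> 0 \<and> \<bar>h'\<bar> < \<delta> \<and> \<epsilon> \<le> norm (q t h - q t h')"
      by (auto simp: not_less) (metis linorder_not_le)
    have "\<forall>n::nat. \<exists>hh. fst hh \<noteq> 0 \<and> \<bar>fst hh\<bar> < 1 / Suc n \<and> snd hh \<noteq> 0 \<and> \<bar>snd hh\<bar> < 1 / Suc n \<and> \<epsilon> \<le> norm (q t (fst hh) - q t (snd hh))"
    proof
      fix n :: nat
      obtain h h' where "h \<noteq> 0 \<and> \<bar>h\<bar> < 1 / Suc n \<and> h' \<noteq> 0 \<and> \<bar>h'\<bar> < 1 / Suc n \<and> \<epsilon> \<le> norm (q t h - q t h')"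
        using eps(2)[rule_format, of "1 / Suc n"] by auto
      then show "\<exists>hh. fst hh \<noteq> 0 \<and> \<bar>fst hh\<bar> < 1 / Suc n \<and> snd hh \<noteq> 0 \<and> \<bar>snd hh\<bar> < 1 / Suc n \<and> \<epsilon> \<le> norm (q t (fst hh) - q t (snd hh))"
        by (intro exI[of _ "(h, h')"]) simp
    qed
    from choice[OF this] obtain hh where hh0: "\<forall>n::nat. fst (hh n) \<noteq> 0 \<and> \<bar>fst (hh n)\<bar> < 1 / Suc n \<and> snd (hh n) \<noteq> 0 \<and> \<bar>snd (hh n)\<bar> < 1 / Suc n \<and> \<epsilon> \<le> norm (q t (fst (hh n)) - q t (snd (hh n)))"
      by blast
    note hh = hh0[rule_format]
    have inK: "\<forall>n. q t (fst (hh n)) \<in> Kc"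
    proof
      fix n show "q t (fst (hh n)) \<in> Kc" using hh[of n] by (intro qK) simp
    qed
    obtain z1 r where z1: "z1 \<in> Kc" "strict_mono r" "((\<lambda>n. q t (fst (hh n))) \<circ> r) \<longlonglongrightarrow> z1"
      by (rule seq_compactE[OF compact_imp_seq_compact[OF K] inK]) blast
    obtain N :: nat where N: "4 / \<epsilon> < N" using reals_Archimedean2 by blast
    define \<rho> where "\<rho> = 1 / real (Suc N)"
    have rho: "0 < \<rho>" "4 * \<rho> < \<epsilon>"
    proof -
      show "0 < \<rho>" unfolding \<rho>_def by simp
      have "4 / \<epsilon> < real (Suc N)" using N by simp
      then show "4 * \<rho> < \<epsilon>" unfolding \<rho>_def using eps(1) by (simp add: field_simps)
    qed
    obtain y where y: "y \<in> net N" "norm (z1 - y) < \<rho>"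
      using net[of N] z1(1) unfolding \<rho>_def by (force simp: dist_norm norm_minus_commute)
    have yD: "y \<in> D" using y(1) unfolding D_def by blast
    obtain N0 where N0: "\<forall>n\<ge>N0. norm (q t (fst (hh (r n))) - z1) < \<rho> - norm (z1 - y)"
    proof -
      have "\<rho> - norm (z1 - y) > 0" using y(2) by simp
      then show ?thesis using z1(3) that unfolding LIMSEQ_iff o_def by blast
    qed
    have close: "norm (q t (fst (hh (r n))) - y) < \<rho>" if "n \<ge> N0" for n
    proof -
      have "norm (q t (fst (hh (r n))) - y) \<le> norm (q t (fst (hh (r n))) - z1) + norm (z1 - y)"
        using norm_triangle_ineq[of "q t (fst (hh (r n))) - z1" "z1 - y"] by simp
      then show ?thesis using N0 that by fastforce
    qed
    have far: "3 * \<rho> < norm (q t (snd (hh (r n))) - y)" if "n \<ge> N0" for n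
    proof -
      have "norm (q t (fst (hh (r n))) - q t (snd (hh (r n)))) \<le> norm (q t (fst (hh (r n))) - y) + norm (q t (snd (hh (r n))) - y)"
        using norm_triangle_ineq4[of "q t (fst (hh (r n))) - y" "q t (snd (hh (r n))) - y"] by simp
      then show ?thesis using close[OF that] hh[of "r n"] rho by linarith
    qed
    have smalln: "\<exists>n\<ge>N0. 1 / real (Suc (r n)) < \<delta>" if "\<delta> > 0" for \<delta> :: real
    proof -
      obtain M :: nat where M: "1 / \<delta> < M" using reals_Archimedean2 by blast
      define m where "m = max M N0"
      have "M \<le> m" "N0 \<le> m" unfolding m_def by auto
      have "real M \<le> real (r m)" using seq_suble[OF z1(2), of m] \<open>M \<le> m\<close> by simp
      then have "1 / \<delta> < real (Suc (r m))" using M by linarith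
      then have "1 / real (Suc (r m)) < \<delta>" using that by (simp add: field_simps)
      then show ?thesis using \<open>N0 \<le> m\<close> by blast
    qed
    obtain R :: nat where R: "\<bar>t\<bar> < R" using reals_Archimedean2 by blast
    have "t \<in> Eb (y, N, R)"
      unfolding Eb_def prod.case mem_Collect_eq
    proof (intro conjI allI impI)
      show "\<bar>t\<bar> < R" by (fact R)
      fix \<delta> :: real assume d: "\<delta> > 0"
      obtain n where n: "n \<ge> N0" "1 / real (Suc (r n)) < \<delta>" using smalln[OF d] by blast
      show "\<exists>h. h \<noteq> 0 \<and> \<bar>h\<bar> < \<delta> \<and> norm (q t h - y) < 1 / real (Suc N)"
        using hh[of "r n"] n close[OF n(1)] unfolding \<rho>_def
        by (intro exI[of _ "fst (hh (r n))"]) auto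
    next
      fix \<delta> :: real assume d: "\<delta> > 0"
      obtain n where n: "n \<ge> N0" "1 / real (Suc (r n)) < \<delta>" using smalln[OF d] by blast
      show "\<exists>h. h \<noteq> 0 \<and> \<bar>h\<bar> < \<delta> \<and> 3 * (1 / real (Suc N)) < norm (q t h - y)"
        using hh[of "r n"] n far[OF n(1)] unfolding \<rho>_def
        by (intro exI[of _ "snd (hh (r n))"]) auto
    qed
    then show "t \<in> \<Union> (Eb ` (D \<times> UNIV \<times> UNIV))" using yD by blast
  qed
  have "negligible (\<Union> (Eb ` (D \<times> UNIV \<times> UNIV)))"
    by (rule negligible_countable_Union) (use Dc Ebn in force)+
  then show ?thesis using sub unfolding q_def by (rule negligible_subset)
qed

lemma lip_image_eq:
  "(\<lambda>p. norm (f (fst p) - f (snd p)) / norm (fst p - snd p)) ` {(x, y). x \<noteq> y} =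
   {norm (f x - f y) / norm (x - y) | x y. x \<noteq> y}"
  by force

lemma lip_quot_le:
  fixes f :: "'a::real_normed_vector \<Rightarrow> 'b::real_normed_vector"
  assumes "f \<in> Lip0" "x \<noteq> y"
  shows "norm (f x - f y) / norm (x - y) \<le> lipnorm f"
proof -
  have bdd: "bdd_above ((\<lambda>p. norm (f (fst p) - f (snd p)) / norm (fst p - snd p)) ` {(x, y). x \<noteq> y})"
    using assms(1) unfolding Lip0_def lip_image_eq by simp
  have "(x, y) \<in> {(x, y). x \<noteq> y}" using assms(2) by simp
  from cSUP_upper[OF this bdd] show ?thesis unfolding lipnorm_def by simp
qed

lemma lip_le:
  fixes f :: "'a::real_normed_vector \<Rightarrow> 'b::real_normed_vector"
  assumes "f \<in> Lip0"
  shows "norm (f x - f y) \<le> lipnorm f * norm (x - y)"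
proof (cases "x = y")
  case True then show ?thesis by simp
next
  case False
  then have "norm (f x - f y) / norm (x - y) \<le> lipnorm f" by (rule lip_quot_le[OF assms])
  then show ?thesis using False by (simp add: divide_le_eq)
qed

lemma lip_least:
  fixes f :: "'a::real_normed_vector \<Rightarrow> 'b::real_normed_vector"
  assumes nt: "\<exists>x::'a. x \<noteq> 0" and le: "\<And>x y. x \<noteq> y \<Longrightarrow> norm (f x - f y) / norm (x - y) \<le> c"
  shows "lipnorm f \<le> c"
proof -
  obtain a :: 'a where "a \<noteq> 0" using nt by blast
  then have ne: "{(x, y). x \<noteq> (y::'a)} \<noteq> {}" by auto
  show ?thesis unfolding lipnorm_def
    by (rule cSUP_least[OF ne]) (use le in auto)
qed

lemma part_e:
  fixes f :: "'a::real_normed_vector \<Rightarrow> 'b::real_normed_vector"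
  assumes nt: "\<exists>x::'a. x \<noteq> 0" and f: "f \<in> Lip0K"
  shows "f \<in> Aset"
proof -
  have fL: "f \<in> Lip0" and K: "compact (closure (slopes f))" using f unfolding Lip0K_def by auto
  obtain a :: 'a where a: "a \<noteq> 0" using nt by blast
  have "(f a - f 0) /\<^sub>R norm (a - 0) \<in> slopes f" unfolding slopes_def using a by blast
  then have "(f a - f 0) /\<^sub>R norm (a - 0) \<in> closure (slopes f)" by (rule subsetD[OF closure_subset])
  then have ne: "closure (slopes f) \<noteq> {}" unfolding ex_in_conv[symmetric] by (rule exI)
  obtain z where z: "z \<in> closure (slopes f)" "\<And>w. w \<in> closure (slopes f) \<Longrightarrow> norm w \<le> norm z"
    using continuous_attains_sup[OF K ne continuous_on_norm_id] by blast
  have sl: "norm ((f x - f y) /\<^sub>R norm (x - y)) = norm (f x - f y) / norm (x - y)" for x y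
    by (simp add: divide_inverse_commute)
  have "slopes f \<subseteq> cball 0 (lipnorm f)"
  proof
    fix w assume "w \<in> slopes f"
    then obtain x y where xy: "x \<noteq> y" "w = (f x - f y) /\<^sub>R norm (x - y)" unfolding slopes_def by blast
    have "norm w \<le> lipnorm f" unfolding xy(2) sl by (rule lip_quot_le[OF fL xy(1)])
    then show "w \<in> cball 0 (lipnorm f)" by simp
  qed
  then have "closure (slopes f) \<subseteq> cball 0 (lipnorm f)" by (rule closure_minimal[OF _ closed_cball])
  then have "z \<in> cball 0 (lipnorm f)" using z(1) by blast
  then have z1: "norm z \<le> lipnorm f" by simp
  have z2: "lipnorm f \<le> norm z"
  proof (rule lip_least[OF nt])
    fix x y :: 'a assume "x \<noteq> y"
    then have "(f x - f y) /\<^sub>R norm (x - y) \<in> slopes f"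
      unfolding slopes_def by blast
    then have "(f x - f y) /\<^sub>R norm (x - y) \<in> closure (slopes f)"
      by (rule subsetD[OF closure_subset])
    then have "norm ((f x - f y) /\<^sub>R norm (x - y)) \<le> norm z" by (rule z(2))
    then show "norm (f x - f y) / norm (x - y) \<le> norm z" unfolding sl .
  qed
  obtain sq where sq: "\<forall>n. sq n \<in> slopes f" "sq \<longlonglongrightarrow> z"
    using z(1) unfolding closure_sequential by blast
  have "\<forall>n. \<exists>p. fst p \<noteq> snd p \<and> sq n = (f (fst p) - f (snd p)) /\<^sub>R norm (fst p - snd p)"
  proof
    fix n
    obtain x y where "x \<noteq> y" "sq n = (f x - f y) /\<^sub>R norm (x - y)" using sq(1) unfolding slopes_def by blast
    then show "\<exists>p. fst p \<noteq> snd p \<and> sq n = (f (fst p) - f (snd p)) /\<^sub>R norm (fst p - snd p)"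
      by (intro exI[of _ "(x, y)"]) simp
  qed
  from choice[OF this] obtain P where P: "\<forall>n. fst (P n) \<noteq> snd (P n) \<and> sq n = (f (fst (P n)) - f (snd (P n))) /\<^sub>R norm (fst (P n) - snd (P n))"
    by blast
  have eq: "(\<lambda>n. (f (fst (P n)) - f (snd (P n))) /\<^sub>R norm (fst (P n) - snd (P n))) = sq"
    using P by auto
  show ?thesis unfolding Aset_def
    apply (rule CollectI, rule conjI, rule fL)
    apply (rule exI[of _ z], rule exI[of _ "\<lambda>n. fst (P n)"], rule exI[of _ "\<lambda>n. snd (P n)"])
    using fL z1 z2 P sq(2) eq by simp
qed

lemma part_b:
  fixes f :: "'a::real_normed_vector \<Rightarrow> 'b::real_normed_vector"
  assumes f: "f \<in> Dset"
  shows "f \<in> LDA"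
proof -
  obtain x e z where fL: "f \<in> Lip0" and e: "norm e = 1"
    and lim: "((\<lambda>t::real. (f (x + t *\<^sub>R e) - f x) /\<^sub>R t) \<longlongrightarrow> z) (at 0)" and nz: "norm z = lipnorm f"
    using f unfolding Dset_def by blast
  define t where "t = (\<lambda>n::nat. inverse (real (Suc n)))"
  have tpos: "t n > 0" for n unfolding t_def by simp
  have t0: "t \<longlonglongrightarrow> 0" unfolding t_def by (rule LIMSEQ_inverse_real_of_nat)
  define xs where "xs = (\<lambda>n. x + t n *\<^sub>R e)"
  define ys where "ys = (\<lambda>n::nat. x)"
  have e0: "e \<noteq> 0" using e by auto
  have nd: "norm (xs n - ys n) = t n" for n unfolding xs_def ys_def using tpos[of n] e by simp
  have neq: "\<forall>n. xs n \<noteq> ys n" unfolding xs_def ys_def using tpos e0 by (simp add: less_imp_neq[symmetric])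
  have q: "(\<lambda>n. (f (xs n) - f (ys n)) /\<^sub>R norm (xs n - ys n)) = (\<lambda>n. (f (x + t n *\<^sub>R e) - f x) /\<^sub>R t n)"
    using nd unfolding xs_def ys_def by simp
  have l1: "(\<lambda>n. (f (xs n) - f (ys n)) /\<^sub>R norm (xs n - ys n)) \<longlonglongrightarrow> z"
  proof -
    have all: "\<forall>S. (\<forall>n. S n \<noteq> 0) \<and> S \<longlonglongrightarrow> 0 \<longrightarrow> (\<lambda>n. (f (x + S n *\<^sub>R e) - f x) /\<^sub>R S n) \<longlonglongrightarrow> z"
      using lim unfolding LIMSEQ_SEQ_conv[symmetric] .
    have "\<forall>n. t n \<noteq> 0" using tpos by (simp add: less_imp_neq[symmetric])
    then show ?thesis unfolding q using all t0 by blast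
  qed
  have u: "(\<lambda>n. (xs n - ys n) /\<^sub>R norm (xs n - ys n)) = (\<lambda>n. e)"
    using nd tpos unfolding xs_def ys_def by (auto intro!: ext simp: less_imp_neq[symmetric])
  have l3: "xs \<longlonglongrightarrow> x"
  proof -
    have "(\<lambda>n. x + t n *\<^sub>R e) \<longlonglongrightarrow> x + 0 *\<^sub>R e"
      by (intro tendsto_intros t0)
    then show ?thesis unfolding xs_def by simp
  qed
  have l4: "ys \<longlonglongrightarrow> x" unfolding ys_def by simp
  show ?thesis unfolding LDA_def
    apply (rule CollectI, rule conjI, rule fL)
    apply (rule exI[of _ z], rule exI[of _ e], rule exI[of _ x], rule exI[of _ xs], rule exI[of _ ys])
    using fL nz e neq l1 l3 l4 by (simp add: u)
qed

lemma part_a: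
  fixes f :: "'a::real_normed_vector \<Rightarrow> 'b::banach"
  assumes f: "f \<in> SA" and K: "compact (closure (slopes f))"
  shows "f \<in> Dset"
proof -
  obtain x y where fL: "f \<in> Lip0" and xy: "x \<noteq> y" and att: "norm (f x - f y) = lipnorm f * norm (x - y)"
    using f unfolding SA_def by blast
  define L where "L = lipnorm f"
  define dd where "dd = norm (x - y)"
  have dd: "0 < dd" using xy unfolding dd_def by simp
  define e where "e = (x - y) /\<^sub>R dd"
  have e: "norm e = 1" unfolding e_def dd_def using xy by simp
  define g where "g = (\<lambda>s::real. f (y + s *\<^sub>R e))"
  have gLip: "norm (g a - g b) \<le> L * \<bar>a - b\<bar>" for a b
  proof -
    have "norm (g a - g b) \<le> L * norm ((y + a *\<^sub>R e) - (y + b *\<^sub>R e))" unfolding g_def L_def by (rule lip_le[OF fL])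
    also have "(y + a *\<^sub>R e) - (y + b *\<^sub>R e) = (a - b) *\<^sub>R e" by (simp add: algebra_simps)
    finally show ?thesis using e by simp
  qed
  have g0: "g 0 = f y" unfolding g_def by simp
  have gd: "g dd = f x" unfolding g_def e_def using dd by simp
  have full: "norm (g dd - g 0) = L * dd" unfolding gd g0 unfolding L_def dd_def by (rule att)
  have sl: "(g s - g t) /\<^sub>R (s - t) \<in> slopes f" if "t < s" for s t
  proof -
    have "(y + s *\<^sub>R e) - (y + t *\<^sub>R e) = (s - t) *\<^sub>R e" by (simp add: algebra_simps)
    then have n: "norm ((y + s *\<^sub>R e) - (y + t *\<^sub>R e)) = s - t" using e that by simp
    then have ne: "y + s *\<^sub>R e \<noteq> y + t *\<^sub>R e" using that by auto
    have "(g s - g t) /\<^sub>R (s - t) = (f (y + s *\<^sub>R e) - f (y + t *\<^sub>R e)) /\<^sub>R norm ((y + s *\<^sub>R e) - (y + t *\<^sub>R e))"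
      unfolding g_def n ..
    then show ?thesis unfolding slopes_def using ne by blast
  qed
  have quot: "(g s - g t) /\<^sub>R (s - t) \<in> closure (slopes f)" if "s \<noteq> t" for s t
  proof -
    have "(g s - g t) /\<^sub>R (s - t) \<in> slopes f"
    proof (cases "t < s")
      case True then show ?thesis by (rule sl)
    next
      case False
      then have st: "s < t" using that by simp
      have a1: "g s - g t = - (g t - g s)" by simp
      have a2: "s - t = - (t - s)" by simp
      have neg: "(- v) /\<^sub>R (- c) = v /\<^sub>R c" for v :: 'b and c :: real by simp
      have "(g s - g t) /\<^sub>R (s - t) = (g t - g s) /\<^sub>R (t - s)"
        using neg[where v="g t - g s" and c="t - s"] by simp
      then show ?thesis using sl[OF st] by simp
    qed
    then show ?thesis by (rule subsetD[OF closure_subset])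
  qed
  have neg: "negligible {t. \<not> (\<exists>z. ((\<lambda>h. (g (t+h) - g t) /\<^sub>R h) \<longlongrightarrow> z) (at 0))}"
    by (rule nonconv_negligible[OF K quot])
  have "\<not> {0<..<dd} \<subseteq> {t. \<not> (\<exists>z. ((\<lambda>h. (g (t+h) - g t) /\<^sub>R h) \<longlongrightarrow> z) (at 0))}"
  proof
    assume sub: "{0<..<dd} \<subseteq> {t. \<not> (\<exists>z. ((\<lambda>h. (g (t+h) - g t) /\<^sub>R h) \<longlongrightarrow> z) (at 0))}"
    have n1: "negligible {0<..<dd}" by (rule negligible_subset[OF neg sub])
    have n2: "negligible {0, dd}" by (rule negligible_finite) simp
    have "negligible ({0<..<dd} \<union> {0, dd})" by (rule negligible_Un[OF n1 n2])
    moreover have "{0..dd} \<subseteq> {0<..<dd} \<union> {0, dd}" by auto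
    ultimately have "negligible {0..dd}" by (rule negligible_subset)
    then have "measure lebesgue {0..dd} = 0" by (rule negligible_imp_measure0)
    then show False using dd by simp
  qed
  then obtain t where tt: "t \<in> {0<..<dd}" "t \<notin> {t. \<not> (\<exists>z. ((\<lambda>h. (g (t+h) - g t) /\<^sub>R h) \<longlongrightarrow> z) (at 0))}"
    unfolding subset_iff by blast
  then have t: "0 < t" "t < dd" by auto
  from tt(2) obtain z where z: "((\<lambda>h. (g (t+h) - g t) /\<^sub>R h) \<longlongrightarrow> z) (at 0)" by blast
  define S where "S = (\<lambda>n::nat. (dd - t) / 2 * inverse (real (Suc n)))"
  have Spos: "0 < S n" for n unfolding S_def using t by simp
  have Slt: "S n < dd - t" for n
  proof -
    have "inverse (real (Suc n)) \<le> 1" by (rule inverse_le_1_iff[THEN iffD2]) simp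
    then have "S n \<le> (dd - t) / 2" unfolding S_def using t by (intro mult_right_le_one_le) auto
    then show ?thesis using t by simp
  qed
  have S0: "S \<longlonglongrightarrow> 0"
  proof -
    have "(\<lambda>n. (dd - t) / 2 * inverse (real (Suc n))) \<longlonglongrightarrow> (dd - t) / 2 * 0"
      by (intro tendsto_mult tendsto_const LIMSEQ_inverse_real_of_nat)
    then show ?thesis unfolding S_def by simp
  qed
  have lim: "(\<lambda>n. (g (t + S n) - g t) /\<^sub>R S n) \<longlonglongrightarrow> z"
  proof -
    have all: "\<forall>S. (\<forall>n. S n \<noteq> 0) \<and> S \<longlonglongrightarrow> 0 \<longrightarrow> (\<lambda>n. (g (t + S n) - g t) /\<^sub>R S n) \<longlonglongrightarrow> z"
      using z unfolding LIMSEQ_SEQ_conv[symmetric] .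
    have "\<forall>n. S n \<noteq> 0" using Spos by (simp add: less_imp_neq[symmetric])
    then show ?thesis using all S0 by blast
  qed
  have nq: "norm ((g (t + S n) - g t) /\<^sub>R S n) = L" for n
  proof -
    define h where "h = S n"
    have h: "0 < h" "t + h < dd" using Spos[of n] Slt[of n] unfolding h_def by auto
    have up: "norm (g (t + h) - g t) \<le> L * h" using gLip[of "t + h" t] h by simp
    have "g dd - g 0 = (g t - g 0) + (g (t + h) - g t) + (g dd - g (t + h))" by simp
    then have "norm (g dd - g 0) \<le> norm (g t - g 0) + norm (g (t + h) - g t) + norm (g dd - g (t + h))"
      using norm_triangle_ineq[of "(g t - g 0) + (g (t + h) - g t)" "g dd - g (t + h)"]
        norm_triangle_ineq[of "g t - g 0" "g (t + h) - g t"] by simp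
    moreover have "norm (g t - g 0) \<le> L * t" using gLip[of t 0] t by simp
    moreover have "norm (g dd - g (t + h)) \<le> L * (dd - (t + h))" using gLip[of dd "t + h"] h by simp
    ultimately have low: "L * h \<le> norm (g (t + h) - g t)" using full by (simp add: algebra_simps)
    have "norm (g (t + h) - g t) = L * h" using up low by simp
    then show ?thesis unfolding h_def[symmetric] using h by simp
  qed
  have "(\<lambda>n. norm ((g (t + S n) - g t) /\<^sub>R S n)) \<longlonglongrightarrow> norm z" by (rule tendsto_norm[OF lim])
  then have "(\<lambda>n. L) \<longlonglongrightarrow> norm z" unfolding nq .
  then have nz: "norm z = L" using LIMSEQ_unique tendsto_const by blast
  have feq: "(\<lambda>s. (f (y + t *\<^sub>R e + s *\<^sub>R e) - f (y + t *\<^sub>R e)) /\<^sub>R s) = (\<lambda>h. (g (t+h) - g t) /\<^sub>R h)"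
    unfolding g_def by (simp add: scaleR_add_left add.assoc)
  show ?thesis unfolding Dset_def
    apply (rule CollectI, rule conjI, rule fL)
    apply (rule exI[of _ "y + t *\<^sub>R e"], rule exI[of _ e], rule exI[of _ z])
    using e z nz feq unfolding L_def by simp
qed

lemma LDA_sub_DA: "LDA \<subseteq> DA"
proof
  fix f :: "'a::real_normed_vector \<Rightarrow> 'b::real_normed_vector" assume "f \<in> LDA"
  then obtain z u xb xs ys where "f \<in> Lip0" "norm z = lipnorm f" "norm u = 1" "\<forall>n. xs n \<noteq> ys n"
      "(\<lambda>n. (f (xs n) - f (ys n)) /\<^sub>R norm (xs n - ys n)) \<longlonglongrightarrow> z"
      "(\<lambda>n. (xs n - ys n) /\<^sub>R norm (xs n - ys n)) \<longlonglongrightarrow> u"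
    unfolding LDA_def by blast
  then show "f \<in> DA" unfolding DA_def by blast
qed

lemma DA_sub_A: "DA \<subseteq> Aset"
proof
  fix f :: "'a::real_normed_vector \<Rightarrow> 'b::real_normed_vector" assume "f \<in> DA"
  then obtain z u xs ys where "f \<in> Lip0" "norm z = lipnorm f" "\<forall>n. xs n \<noteq> ys n"
      "(\<lambda>n. (f (xs n) - f (ys n)) /\<^sub>R norm (xs n - ys n)) \<longlonglongrightarrow> z"
    unfolding DA_def by blast
  then show "f \<in> Aset" unfolding Aset_def by blast
qed

theorem proposition2p9:
  assumes nontriv: "\<exists>x::'a::banach. x \<noteq> 0"
  shows "(SA \<inter> Lip0K :: ('a \<Rightarrow> 'b::banach) set) \<subseteq> Dset \<inter> Lip0K
       \<and> (Dset \<inter> Lip0K :: ('a \<Rightarrow> 'b) set) \<subseteq> LDA \<inter> Lip0K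
       \<and> (LDA \<inter> Lip0K :: ('a \<Rightarrow> 'b) set) \<subseteq> DA \<inter> Lip0K
       \<and> (DA \<inter> Lip0K :: ('a \<Rightarrow> 'b) set) \<subseteq> Aset \<inter> Lip0K
       \<and> (Aset \<inter> Lip0K :: ('a \<Rightarrow> 'b) set) = Lip0K"
proof (intro conjI)
  show "(SA \<inter> Lip0K :: ('a \<Rightarrow> 'b::banach) set) \<subseteq> Dset \<inter> Lip0K"
  proof
    fix f :: "'a \<Rightarrow> 'b" assume f: "f \<in> SA \<inter> Lip0K"
    then have "compact (closure (slopes f))" unfolding Lip0K_def by blast
    then have "f \<in> Dset" using f by (intro part_a) auto
    then show "f \<in> Dset \<inter> Lip0K" using f by blast
  qed
  show "(Dset \<inter> Lip0K :: ('a \<Rightarrow> 'b) set) \<subseteq> LDA \<inter> Lip0K"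
    using part_b by blast
  show "(LDA \<inter> Lip0K :: ('a \<Rightarrow> 'b) set) \<subseteq> DA \<inter> Lip0K"
    using LDA_sub_DA by blast
  show "(DA \<inter> Lip0K :: ('a \<Rightarrow> 'b) set) \<subseteq> Aset \<inter> Lip0K"
    using DA_sub_A by blast
  show "(Aset \<inter> Lip0K :: ('a \<Rightarrow> 'b) set) = Lip0K"
    using part_e[OF nontriv] by blast
qed

end
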